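(* Let $\mathcal Q_{bin}$ be the collection of all probability measures $\mu$ on $\{0,1\}^{\mathbb N}$ with $\mathrm{Mean}(\mu)\in\{0,1\}^{\mathbb N}$. Then $\mathcal Q_{bin}$ is non-separable in its means, and $\mathcal Q_{bin}$ is UME-learnable.
   Context: $\{0,1\}^{\mathbb N}$ carries the product $\sigma$-algebra. For a probability measure $\mu$ on $\{0,1\}^{\mathbb N}$, $\mathrm{Mean}(\mu)\in[0,1]^{\mathbb N}$ is the vector whose $j$-th coordinate is $\mathbb E[X_j]$ for $X\sim\mu$; $\mathrm{Mean}(\mathcal Q)=\{\mathrm{Mean}(\mu):\mu\in\mathcal Q\}$. A countable $\varepsilon$-cover of $\mathrm{Mean}(\mathcal Q)$ is a countable set $C\subset[0,1]^{\mathbb N}$ such that every $q\in\mathrm{Mean}(\mathcal Q)$ has some $p\in C$ with $\|q-p\|_\infty<\varepsilon$. $\mathcal Q$ is separable in its means if for every $\varepsilon>0$ a countable $\varepsilon$-cover exists, and non-separable in its means otherwise. $\mathcal Q$ is UME-learnable if there exist (measurable) estimators $\mathcal A_n:(\{0,1\}^{\mathbb N})^n\to[0,1]^{\mathbb N}$ such that for every $\mu\in\mathcal Q$, $\mathbb E_{S\sim\mu^n}\|\mathcal A_n(S)-\mathrm{Mean}(\mu)\|_\infty\to0$ as $n\to\infty$, where $S$ consists of $n$ i.i.d. draws from $\mu$. *)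

theory Defs
  imports "HOL-Probability.Probability"
begin

definition bitseq_space :: "(nat \<Rightarrow> bool) measure" where
  "bitseq_space = (\<Pi>\<^sub>M j\<in>UNIV. count_space UNIV)"

definition Mean :: "(nat \<Rightarrow> bool) measure \<Rightarrow> nat \<Rightarrow> real" where
  "Mean \<mu> = (\<lambda>j. \<integral>x. (if x j then 1 else 0) \<partial>\<mu>)"

definition sup_dist :: "(nat \<Rightarrow> real) \<Rightarrow> (nat \<Rightarrow> real) \<Rightarrow> real" where
  "sup_dist q p = (SUP j. \<bar>q j - p j\<bar>)"

definition unit_cube :: "(nat \<Rightarrow> real) set" where
  "unit_cube = {p. \<forall>j. p j \<in> {0..1}}"

definition separable_in_means :: "(nat \<Rightarrow> bool) measure set \<Rightarrow> bool" where
  "separable_in_means Q \<longleftrightarrow>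
     (\<forall>\<epsilon>>0. \<exists>C. countable C \<and> C \<subseteq> unit_cube \<and>
        (\<forall>q\<in>Mean ` Q. \<exists>p\<in>C. sup_dist q p < \<epsilon>))"

text \<open>Samples of size n: functions on {..<n} distributed as the n-fold product of mu.\<close>
definition UME_learnable :: "(nat \<Rightarrow> bool) measure set \<Rightarrow> bool" where
  "UME_learnable Q \<longleftrightarrow>
     (\<exists>A :: nat \<Rightarrow> (nat \<Rightarrow> nat \<Rightarrow> bool) \<Rightarrow> nat \<Rightarrow> real.
        (\<forall>n. A n \<in> measurable (\<Pi>\<^sub>M i\<in>{..<n}. bitseq_space) (\<Pi>\<^sub>M j\<in>UNIV. borel) \<and>
             (\<forall>S\<in>space (\<Pi>\<^sub>M i\<in>{..<n}. bitseq_space). A n S \<in> unit_cube)) \<and>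
        (\<forall>\<mu>\<in>Q. (\<lambda>n. \<integral>S. sup_dist (A n S) (Mean \<mu>) \<partial>(\<Pi>\<^sub>M i\<in>{..<n}. \<mu>)) \<longlonglongrightarrow> 0))"

definition Q_bin :: "(nat \<Rightarrow> bool) measure set" where
  "Q_bin = {\<mu>. prob_space \<mu> \<and> sets \<mu> = sets bitseq_space \<and> (\<forall>j. Mean \<mu> j \<in> {0, 1})}"

end

theory Submission
  imports Defs
begin

lemma space_bitseq[simp]: "space bitseq_space = UNIV"
  by (simp add: bitseq_space_def space_PiM)

lemma coord_meas[measurable]: "(\<lambda>x. x j) \<in> measurable bitseq_space (count_space UNIV)"
  unfolding bitseq_space_def by (rule measurable_component_singleton) simp

lemma coord_real_meas: "(\<lambda>x. if x j then 1 else 0 :: real) \<in> borel_measurable bitseq_space"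
proof -
  have "(\<lambda>b::bool. if b then 1 else 0 :: real) \<in> measurable (count_space UNIV) borel" by simp
  from measurable_comp[OF coord_meas this] show ?thesis by (simp add: o_def)
qed

lemma nat_bool_uncountable: "\<not> countable (UNIV :: (nat \<Rightarrow> bool) set)"
proof
  assume "countable (UNIV :: (nat \<Rightarrow> bool) set)"
  then obtain f :: "nat \<Rightarrow> nat \<Rightarrow> bool" where "range f = UNIV"
    using uncountable_def[of "UNIV :: (nat \<Rightarrow> bool) set"] UNIV_not_empty by blast
  then have "(\<lambda>k. \<not> f k k) \<in> range f" by simp
  then obtain n where fn: "f n = (\<lambda>k. \<not> f k k)" by (auto simp del: range_eqI)
  have "f n n = (\<not> f n n)" using fun_cong[OF fn, of n] by simp
  then show False by simp
qed

lemma Mean_return: "Mean (return bitseq_space b) = (\<lambda>j. if b j then 1 else 0)"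
  unfolding Mean_def by (intro ext integral_return coord_real_meas) simp

lemma return_in_Q: "return bitseq_space b \<in> Q_bin"
  unfolding Q_bin_def by (auto simp: prob_space_return Mean_return)

lemma sup_dist_ge:
  assumes "p \<in> unit_cube" "\<forall>j. q j \<in> {0..1}"
  shows "\<bar>q j - p j\<bar> \<le> sup_dist q p"
  unfolding sup_dist_def
proof (rule cSUP_upper)
  have "\<forall>j. \<bar>q j - p j\<bar> \<le> 1"
  proof
    fix j
    have "0 \<le> p j" "p j \<le> 1" "0 \<le> q j" "q j \<le> 1" using assms by (auto simp: unit_cube_def)
    then show "\<bar>q j - p j\<bar> \<le> 1" by linarith
  qed
  then show "bdd_above (range (\<lambda>j. \<bar>q j - p j\<bar>))" by (intro bdd_aboveI2) blast
qed simp

lemma not_sep: "\<not> separable_in_means Q_bin"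
proof
  assume "separable_in_means Q_bin"
  then obtain C where C: "countable C" "C \<subseteq> unit_cube"
    "\<forall>q\<in>Mean ` Q_bin. \<exists>p\<in>C. sup_dist q p < 1/2"
    unfolding separable_in_means_def
    by (metis (no_types, lifting) field_sum_of_halves half_gt_zero_iff zero_less_one)
  define e where "e b = (\<lambda>j. if b j then 1 else 0 :: real)" for b :: "nat \<Rightarrow> bool"
  have "\<forall>b. \<exists>p\<in>C. sup_dist (e b) p < 1/2"
    using C(3) return_in_Q Mean_return unfolding e_def by (metis image_eqI)
  then obtain g where g: "\<And>b. g b \<in> C" "\<And>b. sup_dist (e b) (g b) < 1/2" by metis
  have e01: "\<forall>j. e b j \<in> {0..1}" for b by (simp add: e_def)
  have "inj g"
  proof (rule injI)
    fix a b assume eq: "g a = g b"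
    show "a = b"
    proof (rule ext, rule ccontr)
      fix j assume ne: "a j \<noteq> b j"
      have "\<bar>e a j - g a j\<bar> < 1/2"
        using sup_dist_ge[OF subsetD[OF C(2) g(1)] e01] g(2) by (meson le_less_trans)
      moreover have "\<bar>e b j - g b j\<bar> < 1/2"
        using sup_dist_ge[OF subsetD[OF C(2) g(1)] e01] g(2) by (meson le_less_trans)
      ultimately show False using ne eq by (auto simp: e_def split: if_splits)
    qed
  qed
  moreover have "range g \<subseteq> C" using g(1) by auto
  then have "countable (range g)" using countable_subset C(1) by blast
  ultimately have "countable (UNIV :: (nat \<Rightarrow> bool) set)"
    using countable_image_inj_on by blast
  then show False using nat_bool_uncountable by blast
qed

lemma Q_bin_AE:
  assumes mu: "\<mu> \<in> Q_bin"
  shows "AE x in \<mu>. \<forall>j. (if x j then 1 else 0) = Mean \<mu> j"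
proof -
  have ps: "prob_space \<mu>" and ss: "sets \<mu> = sets bitseq_space" and m01: "\<And>j. Mean \<mu> j \<in> {0,1}"
    using mu by (auto simp: Q_bin_def)
  interpret prob_space \<mu> by (rule ps)
  have sp: "space \<mu> = UNIV" using sets_eq_imp_space_eq[OF ss] by simp
  show ?thesis
  proof (subst AE_all_countable, intro allI)
    fix j
    define A where "A = {x \<in> space \<mu>. x j}"
    have cm: "(\<lambda>x. x j) \<in> measurable \<mu> (count_space UNIV)"
      using coord_meas measurable_cong_sets[OF ss refl] by blast
    have A: "A \<in> sets \<mu>"
    proof -
      have "(\<lambda>x. x j) -` {True} \<inter> space \<mu> \<in> sets \<mu>" by (rule measurable_sets[OF cm]) simp
      moreover have "(\<lambda>x. x j) -` {True} \<inter> space \<mu> = A" by (auto simp: A_def)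
      ultimately show ?thesis by simp
    qed
    have "Mean \<mu> j = integral\<^sup>L \<mu> (indicator A)"
      unfolding Mean_def by (intro Bochner_Integration.integral_cong) (auto simp: A_def sp indicator_def)
    also have "\<dots> = prob A" by (simp add: sp)
    finally have MA: "Mean \<mu> j = prob A" .
    show "AE x in \<mu>. (if x j then 1 else 0) = Mean \<mu> j"
    proof (cases "Mean \<mu> j = 1")
      case True
      then have "AE x in \<mu>. x \<in> A" using MA by (intro AE_prob_1) simp
      then show ?thesis by eventually_elim (use True in \<open>auto simp: A_def\<close>)
    next
      case False
      then have M0: "Mean \<mu> j = 0" using m01[of j] by auto
      then have "prob (space \<mu> - A) = 1" using MA prob_compl[OF A] by simp
      then have "AE x in \<mu>. x \<in> space \<mu> - A" by (rule AE_prob_1)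
      then show ?thesis by eventually_elim (use M0 in \<open>auto simp: A_def\<close>)
    qed
  qed
qed

definition Aest :: "nat \<Rightarrow> (nat \<Rightarrow> nat \<Rightarrow> bool) \<Rightarrow> nat \<Rightarrow> real" where
  "Aest n S = (if n = 0 then (\<lambda>j. 0) else (\<lambda>j. if S 0 j then 1 else 0))"

lemma Aest_meas: "Aest n \<in> measurable (\<Pi>\<^sub>M i\<in>{..<n}. bitseq_space) (\<Pi>\<^sub>M j\<in>UNIV. borel)"
proof (cases "n = 0")
  case True
  then have "Aest n = (\<lambda>S j. 0)" by (simp add: Aest_def fun_eq_iff)
  then show ?thesis by (simp add: space_PiM)
next
  case False
  have c0: "(\<lambda>S. S 0) \<in> measurable (\<Pi>\<^sub>M i\<in>{..<n}. bitseq_space) bitseq_space"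
    using False by (intro measurable_component_singleton) simp
  have "(\<lambda>S j. if S 0 j then 1 else 0 :: real) \<in> measurable (\<Pi>\<^sub>M i\<in>{..<n}. bitseq_space) (\<Pi>\<^sub>M j\<in>UNIV. borel)"
  proof (rule measurable_PiM_single')
    fix j :: nat
    show "(\<lambda>S. if S 0 j then 1 else 0 :: real) \<in> borel_measurable (\<Pi>\<^sub>M i\<in>{..<n}. bitseq_space)"
      using measurable_comp[OF c0 coord_real_meas[of j]] by (simp add: o_def)
  qed simp
  then show ?thesis using False unfolding Aest_def by simp
qed

lemma learn: "UME_learnable Q_bin"
  unfolding UME_learnable_def
proof (intro exI[of _ Aest] conjI allI ballI)
  fix n show "Aest n \<in> measurable (\<Pi>\<^sub>M i\<in>{..<n}. bitseq_space) (\<Pi>\<^sub>M j\<in>UNIV. borel)"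
    by (rule Aest_meas)
next
  fix n S show "Aest n S \<in> unit_cube" by (simp add: Aest_def unit_cube_def)
next
  fix \<mu> assume mu: "\<mu> \<in> Q_bin"
  have ps: "prob_space \<mu>" using mu by (simp add: Q_bin_def)
  have "\<And>n. n \<ge> 1 \<Longrightarrow> (\<integral>S. sup_dist (Aest n S) (Mean \<mu>) \<partial>(\<Pi>\<^sub>M i\<in>{..<n}. \<mu>)) = 0"
  proof -
    fix n :: nat assume n: "n \<ge> 1"
    have "AE S in (\<Pi>\<^sub>M i\<in>{..<n}. \<mu>). \<forall>j. (if S 0 j then 1 else 0) = Mean \<mu> j"
      using n AE_PiM_component[where P="\<lambda>x. \<forall>j. (if x j then 1 else 0) = Mean \<mu> j"
          and I="{..<n}" and M="\<lambda>_. \<mu>" and i=0, OF ps _ Q_bin_AE[OF mu]] by simp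
    then show "(\<integral>S. sup_dist (Aest n S) (Mean \<mu>) \<partial>(\<Pi>\<^sub>M i\<in>{..<n}. \<mu>)) = 0"
    proof (intro integral_eq_zero_AE, elim AE_mp, intro AE_I2 impI)
      fix S :: "nat \<Rightarrow> nat \<Rightarrow> bool"
      assume h: "\<forall>j. (if S 0 j then 1 else 0) = Mean \<mu> j"
      have "Aest n S = Mean \<mu>" using n h by (auto simp: Aest_def fun_eq_iff)
      then show "sup_dist (Aest n S) (Mean \<mu>) = 0" by (simp add: sup_dist_def)
    qed
  qed
  then have "eventually (\<lambda>n. (\<integral>S. sup_dist (Aest n S) (Mean \<mu>) \<partial>(\<Pi>\<^sub>M i\<in>{..<n}. \<mu>)) = 0) sequentially"
    by (intro eventually_sequentiallyI[of 1])
  then show "(\<lambda>n. \<integral>S. sup_dist (Aest n S) (Mean \<mu>) \<partial>(\<Pi>\<^sub>M i\<in>{..<n}. \<mu>)) \<longlonglongrightarrow> 0"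
    by (rule tendsto_eventually)
qed

theorem mainTheorem5:
  shows "\<not> separable_in_means Q_bin \<and> UME_learnable Q_bin"
  using not_sep learn by blast

end
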